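(* Let $\alpha>0$. Let $u_0:\mathbb{R}\to[0,1]$ be uniformly continuous with $u_0>0$ on $\mathbb{R}$, $\liminf_{x\to-\infty}u_0>0$, $\lim_{x\to+\infty}u_0=0$, of class $C^2$ and nonincreasing on $[\xi_0,+\infty)$ for some $\xi_0>0$, and such that $\varphi_0:=-\ln u_0$ satisfies $\varphi_0'=o(\varphi_0^{-\alpha})$ and $\varphi_0''=o(\varphi_0')$ as $x\to+\infty$. Let $\rho>0$ and define $$w(t,x):=\exp\Big\{1-\big[(1+\varphi_0(x))^{\alpha+1}-\rho(\alpha+1)t\big]^{\frac{1}{\alpha+1}}\Big\},\qquad x_0(t):=\sup\Big\{x\in\mathbb{R}: u_0(x)=\exp\big(1-(\rho(\alpha+1)t+1)^{\frac{1}{\alpha+1}}\big)\Big\}.$$ Then there is $t^1>0$ such that $$w_x(t,x)+w_{xx}(t,x)\le 0\quad\text{for all } x\ge x_0(t)\text{ and } t\ge t^1.$$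
   Context: $w$ solves $w_t=\rho\, w/(1-\ln w)^\alpha$ with $w(0,\cdot)=u_0$; one has $w(t,x_0(t))=1$ and $0<w(t,x)\le1$ for $x\ge x_0(t)$. *)

theory Defs
  imports "HOL-Analysis.Analysis"
begin

definition phi0 :: "(real \<Rightarrow> real) \<Rightarrow> real \<Rightarrow> real" where
  "phi0 u0 x = - ln (u0 x)"

text \<open>The explicit solution w(t,x) of w_t = rho w/(1 - ln w)^alpha with w(0,.) = u0.\<close>
definition wsol :: "real \<Rightarrow> real \<Rightarrow> (real \<Rightarrow> real) \<Rightarrow> real \<Rightarrow> real \<Rightarrow> real" where
  "wsol \<alpha> \<rho> u0 t x =
     exp (1 - (((1 + phi0 u0 x) powr (\<alpha> + 1) - \<rho> * (\<alpha> + 1) * t) powr (1 / (\<alpha> + 1))))"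

definition x0 :: "real \<Rightarrow> real \<Rightarrow> (real \<Rightarrow> real) \<Rightarrow> real \<Rightarrow> real" where
  "x0 \<alpha> \<rho> u0 t =
     Sup {x. u0 x = exp (1 - (\<rho> * (\<alpha> + 1) * t + 1) powr (1 / (\<alpha> + 1)))}"

definition C2_on_ge :: "(real \<Rightarrow> real) \<Rightarrow> real \<Rightarrow> bool" where
  "C2_on_ge f a \<longleftrightarrow> (\<exists>f' f''.
     (\<forall>x\<ge>a. (f has_real_derivative f' x) (at x within {a..})) \<and>
     (\<forall>x\<ge>a. (f' has_real_derivative f'' x) (at x within {a..})) \<and>
     continuous_on {a..} f'')"

end

theory Submission
  imports Defs
begin

definition Bf :: "real \<Rightarrow> real \<Rightarrow> real \<Rightarrow> real" where
  "Bf a K s = (1+s) powr (a+1) - K"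
definition hf :: "real \<Rightarrow> real \<Rightarrow> real \<Rightarrow> real" where
  "hf a K s = exp (1 - Bf a K s powr (1/(a+1)))"
definition mf :: "real \<Rightarrow> real \<Rightarrow> real \<Rightarrow> real" where
  "mf a K s = Bf a K s powr (1/(a+1) - 1) * (1+s) powr a"
definition mf' :: "real \<Rightarrow> real \<Rightarrow> real \<Rightarrow> real" where
  "mf' a K s = (1/(a+1) - 1) * Bf a K s powr (1/(a+1) - 2) * ((a+1) * (1+s) powr a) * (1+s) powr a
     + Bf a K s powr (1/(a+1) - 1) * (a * (1+s) powr (a-1))"

lemma Bf_deriv: assumes "1+s>0" shows "(Bf a K has_real_derivative (a+1) * (1+s) powr a) (at s)"
proof -
  have "((\<lambda>s. 1+s) has_real_derivative 1) (at s)" by (auto intro!: derivative_eq_intros)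
  from DERIV_fun_powr[OF this assms, of "a+1"]
  have "((\<lambda>s. (1+s) powr (a+1)) has_real_derivative (a+1) * (1+s) powr a) (at s)" by simp
  then show ?thesis unfolding Bf_def[abs_def] using assms by (auto intro!: derivative_eq_intros)
qed

lemma hf_deriv: assumes "1+s>0" "Bf a K s > 0" "a > 0"
  shows "(hf a K has_real_derivative (- hf a K s * mf a K s)) (at s)"
proof -
  from DERIV_fun_powr[OF Bf_deriv[OF assms(1)] assms(2), of "1/(a+1)"]
  have d: "((\<lambda>s. Bf a K s powr (1/(a+1))) has_real_derivative
     1/(a+1) * Bf a K s powr (1/(a+1) - 1) * ((a+1) * (1+s) powr a)) (at s)" by simp
  have "((\<lambda>s. exp (1 - Bf a K s powr (1/(a+1)))) has_real_derivative
      exp (1 - Bf a K s powr (1/(a+1))) * (0 - 1/(a+1) * Bf a K s powr (1/(a+1) - 1) * ((a+1) * (1+s) powr a))) (at s)"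
    by (intro DERIV_chain2[OF DERIV_exp] DERIV_diff DERIV_const d)
  moreover have "exp (1 - Bf a K s powr (1/(a+1))) * (0 - 1/(a+1) * Bf a K s powr (1/(a+1) - 1) * ((a+1) * (1+s) powr a))
     = - hf a K s * mf a K s" unfolding hf_def mf_def using assms(3) by (simp add: field_simps)
  ultimately show ?thesis unfolding hf_def[abs_def] by (metis DERIV_cong)
qed

lemma mf_deriv: assumes "1+s>0" "Bf a K s > 0" "a > 0"
  shows "(mf a K has_real_derivative mf' a K s) (at s)"
proof -
  from DERIV_fun_powr[OF Bf_deriv[OF assms(1)] assms(2), of "1/(a+1) - 1"]
  have d: "((\<lambda>s. Bf a K s powr (1/(a+1) - 1)) has_real_derivative
     (1/(a+1) - 1) * Bf a K s powr (1/(a+1) - 1 - 1) * ((a+1) * (1+s) powr a)) (at s)" by simp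
  have "((\<lambda>s. 1+s) has_real_derivative 1) (at s)" by (auto intro!: derivative_eq_intros)
  from DERIV_fun_powr[OF this assms(1), of "a"]
  have e: "((\<lambda>s. (1+s) powr a) has_real_derivative a * (1+s) powr (a-1)) (at s)" by simp
  from DERIV_mult[OF d e] show ?thesis unfolding mf_def[abs_def] mf'_def
    by (simp add: field_simps)
qed


lemma mf_bounds: assumes "a > 0" "s \<ge> 0" "Bf a K s \<ge> 1"
  shows "0 \<le> mf a K s" "mf a K s \<le> (1+s) powr a" "- mf' a K s \<le> a * mf a K s * (1+s) powr a"
proof -
  have e1: "Bf a K s powr (1/(a+1) - 1) \<le> 1"
    using powr_mono[of "1/(a+1) - 1" 0 "Bf a K s"] assms by (simp add: field_simps)
  have e2: "Bf a K s powr (1/(a+1) - 2) \<le> Bf a K s powr (1/(a+1) - 1)"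
    using powr_mono[of "1/(a+1) - 2" "1/(a+1) - 1" "Bf a K s"] assms by simp
  show "0 \<le> mf a K s" unfolding mf_def by simp
  show "mf a K s \<le> (1+s) powr a" unfolding mf_def using e1
    by (simp add: mult_left_le_one_le)
  have c: "(1/(a+1) - 1) * (a+1) = - a" using assms by (simp add: field_simps)
  have t2: "0 \<le> Bf a K s powr (1/(a+1) - 1) * (a * (1+s) powr (a-1))" using assms by simp
  have "- mf' a K s = a * Bf a K s powr (1/(a+1) - 2) * ((1+s) powr a * (1+s) powr a)
      - Bf a K s powr (1/(a+1) - 1) * (a * (1+s) powr (a-1))"
  proof -
    have g: "(1/(a+1)-1)*X*((a+1)*Y)*Y = ((1/(a+1)-1)*(a+1))*X*(Y*Y)" for X Y :: real
      by (simp only: mult.assoc mult.commute mult.left_commute)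
    show ?thesis unfolding mf'_def g c by simp
  qed
  also have "\<dots> \<le> a * Bf a K s powr (1/(a+1) - 2) * ((1+s) powr a * (1+s) powr a)" using t2 by linarith
  also have "\<dots> \<le> a * Bf a K s powr (1/(a+1) - 1) * ((1+s) powr a * (1+s) powr a)"
    using e2 assms by (intro mult_right_mono mult_left_mono) auto
  also have "\<dots> = a * mf a K s * (1+s) powr a" unfolding mf_def by simp
  finally show "- mf' a K s \<le> a * mf a K s * (1+s) powr a" .
qed

lemma final_ineq:
  fixes H M M' P Q R a :: real
  assumes "H > 0" "M \<ge> 0" "P \<ge> 0" "\<bar>Q\<bar> \<le> P/2" "M \<le> R" "- M' \<le> a * M * R"
    "(1+a) * R * P \<le> 1/2" "a > 0"
  shows "-H*M*P + (-( (-(H*M)*P) * M * P + H*(M'*P)*P + H*M*Q)) \<le> 0"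
proof -
  have eq: "-H*M*P + (-( (-(H*M)*P) * M * P + H*(M'*P)*P + H*M*Q)) = H * (-M*P + M*M*P*P + (-M')*P*P - M*Q)"
    by (simp add: algebra_simps)
  have b1: "M*M*P*P \<le> M*R*P*P" using assms by (intro mult_right_mono mult_left_mono) auto
  have b2: "(-M')*P*P \<le> a*M*R*P*P" using assms by (intro mult_right_mono) auto
  have "- Q \<le> P/2" using assms(4) by linarith
  then have b3: "M * (- Q) \<le> M * (P/2)" using assms(2) by (rule mult_left_mono)
  have b4: "M*P*((1+a)*R*P) \<le> M*P*(1/2)" using assms by (intro mult_left_mono) auto
  have "-M*P + M*M*P*P + (-M')*P*P - M*Q \<le> -M*P + M*R*P*P + a*M*R*P*P + M * (P/2)"
    using b1 b2 b3 by simp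
  also have "\<dots> = M*P*((1+a)*R*P) - M*P*(1/2)" by (simp add: algebra_simps)
  also have "\<dots> \<le> 0" using b4 by simp
  finally have "-M*P + M*M*P*P + (-M')*P*P - M*Q \<le> 0" .
  then show ?thesis unfolding eq using assms(1) by (simp add: mult_nonpos_nonneg mult_le_0_iff)
qed


lemma W_derivs:
  fixes \<phi> p :: "real \<Rightarrow> real"
  assumes S: "open S" "x \<in> S" and a: "a>0"
    and dphi: "\<forall>y\<in>S. (\<phi> has_real_derivative p y) (at y)"
    and dp: "(p has_real_derivative Q) (at x)"
    and pos: "\<forall>y\<in>S. 1 + \<phi> y > 0 \<and> Bf a K (\<phi> y) > 0"
  shows "deriv (\<lambda>y. hf a K (\<phi> y)) x = - hf a K (\<phi> x) * mf a K (\<phi> x) * p x"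
    "deriv (deriv (\<lambda>y. hf a K (\<phi> y))) x = -( (-(hf a K (\<phi> x) * mf a K (\<phi> x)) * p x) * mf a K (\<phi> x) * p x
        + hf a K (\<phi> x) * (mf' a K (\<phi> x) * p x) * p x + hf a K (\<phi> x) * mf a K (\<phi> x) * Q)"
proof -
  have d1: "((\<lambda>y. hf a K (\<phi> y)) has_real_derivative - hf a K (\<phi> y) * mf a K (\<phi> y) * p y) (at y)"
    if "y \<in> S" for y
    using DERIV_chain2[OF hf_deriv dphi[rule_format, OF that]] pos that a by simp
  then have e1: "deriv (\<lambda>y. hf a K (\<phi> y)) y = - hf a K (\<phi> y) * mf a K (\<phi> y) * p y" if "y \<in> S" for y
    using that by (intro DERIV_imp_deriv) auto
  then show "deriv (\<lambda>y. hf a K (\<phi> y)) x = - hf a K (\<phi> x) * mf a K (\<phi> x) * p x" using S by auto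
  have px: "(\<phi> has_real_derivative p x) (at x)" using dphi S by auto
  have f1: "((\<lambda>y. - hf a K (\<phi> y)) has_real_derivative - (- hf a K (\<phi> x) * mf a K (\<phi> x) * p x)) (at x)"
    using d1[OF S(2)] by (rule DERIV_minus)
  have f2: "((\<lambda>y. mf a K (\<phi> y)) has_real_derivative mf' a K (\<phi> x) * p x) (at x)"
    using DERIV_chain2[OF mf_deriv px] pos S a by simp
  have "((\<lambda>y. - hf a K (\<phi> y) * mf a K (\<phi> y) * p y) has_real_derivative
     (- (- hf a K (\<phi> x) * mf a K (\<phi> x) * p x) * mf a K (\<phi> x) + mf' a K (\<phi> x) * p x * (- hf a K (\<phi> x))) * p x
      + Q * (- hf a K (\<phi> x) * mf a K (\<phi> x))) (at x)"
    by (intro DERIV_mult f1 f2 dp)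
  moreover have "(- (- hf a K (\<phi> x) * mf a K (\<phi> x) * p x) * mf a K (\<phi> x) + mf' a K (\<phi> x) * p x * (- hf a K (\<phi> x))) * p x
      + Q * (- hf a K (\<phi> x) * mf a K (\<phi> x)) = -( (-(hf a K (\<phi> x) * mf a K (\<phi> x)) * p x) * mf a K (\<phi> x) * p x
        + hf a K (\<phi> x) * (mf' a K (\<phi> x) * p x) * p x + hf a K (\<phi> x) * mf a K (\<phi> x) * Q)"
    by (simp add: algebra_simps)
  ultimately have "((\<lambda>y. - hf a K (\<phi> y) * mf a K (\<phi> y) * p y) has_real_derivative
     -( (-(hf a K (\<phi> x) * mf a K (\<phi> x)) * p x) * mf a K (\<phi> x) * p x
        + hf a K (\<phi> x) * (mf' a K (\<phi> x) * p x) * p x + hf a K (\<phi> x) * mf a K (\<phi> x) * Q)) (at x)"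
    by (metis DERIV_cong)
  then have "(deriv (\<lambda>y. hf a K (\<phi> y)) has_real_derivative
     -( (-(hf a K (\<phi> x) * mf a K (\<phi> x)) * p x) * mf a K (\<phi> x) * p x
        + hf a K (\<phi> x) * (mf' a K (\<phi> x) * p x) * p x + hf a K (\<phi> x) * mf a K (\<phi> x) * Q)) (at x)"
    by (rule has_field_derivative_transform_within_open[OF _ S]) (simp add: e1)
  then show "deriv (deriv (\<lambda>y. hf a K (\<phi> y))) x = -( (-(hf a K (\<phi> x) * mf a K (\<phi> x)) * p x) * mf a K (\<phi> x) * p x
        + hf a K (\<phi> x) * (mf' a K (\<phi> x) * p x) * p x + hf a K (\<phi> x) * mf a K (\<phi> x) * Q)"
    by (rule DERIV_imp_deriv)
qed

theorem lemma3p2: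
  fixes \<alpha> \<rho> :: real and u0 :: "real \<Rightarrow> real"
  assumes alpha_pos: "\<alpha> > 0"
    and rho_pos: "\<rho> > 0"
    and uc: "uniformly_continuous_on UNIV u0"
    and range01: "\<And>x. 0 \<le> u0 x \<and> u0 x \<le> 1"
    and pos: "\<And>x. u0 x > 0"
    and liminf_left: "Liminf at_bot (\<lambda>x. ereal (u0 x)) > 0"
    and lim_right: "(u0 \<longlongrightarrow> 0) at_top"
    and xi0: "\<xi>0 > 0" "C2_on_ge u0 \<xi>0" "\<And>x y. \<xi>0 \<le> x \<Longrightarrow> x \<le> y \<Longrightarrow> u0 y \<le> u0 x"
    and phi_d1: "(\<lambda>x. deriv (phi0 u0) x) \<in> o[at_top](\<lambda>x. (phi0 u0 x) powr (- \<alpha>))"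
    and phi_d2: "(\<lambda>x. deriv (deriv (phi0 u0)) x) \<in> o[at_top](\<lambda>x. deriv (phi0 u0) x)"
  shows "\<exists>t1>0. \<forall>t\<ge>t1. \<forall>x\<ge>x0 \<alpha> \<rho> u0 t.
           deriv (\<lambda>y. wsol \<alpha> \<rho> u0 t y) x + deriv (deriv (\<lambda>y. wsol \<alpha> \<rho> u0 t y)) x \<le> 0"
proof -
  define \<phi> where "\<phi> = phi0 u0"
  have cont: "continuous_on UNIV u0" using uc by (rule uniformly_continuous_imp_continuous)
  obtain u1 u2 where U1: "\<forall>x\<ge>\<xi>0. (u0 has_real_derivative u1 x) (at x within {\<xi>0..})"
     and U2: "\<forall>x\<ge>\<xi>0. (u1 has_real_derivative u2 x) (at x within {\<xi>0..})"
     using xi0(2) unfolding C2_on_ge_def by blast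
  have atw: "at y within {\<xi>0..} = at y" if "y > \<xi>0" for y
     using that by (intro at_within_interior) auto
  have du0: "(u0 has_real_derivative u1 y) (at y)" if "y > \<xi>0" for y
  proof -
    have "(u0 has_real_derivative u1 y) (at y within {\<xi>0..})" using U1 that by simp
    then show ?thesis using atw[OF that] by simp
  qed
  have du1: "(u1 has_real_derivative u2 y) (at y)" if "y > \<xi>0" for y
  proof -
    have "(u1 has_real_derivative u2 y) (at y within {\<xi>0..})" using U2 that by simp
    then show ?thesis using atw[OF that] by simp
  qed
  have phi_nonneg: "\<phi> y \<ge> 0" for y
    using pos[of y] range01[of y] unfolding \<phi>_def phi0_def by simp
  have dphi: "(\<phi> has_real_derivative -(u1 y / u0 y)) (at y)" if "y > \<xi>0" for y
  proof -
    have "((\<lambda>y. - ln (u0 y)) has_real_derivative - (1 / u0 y * u1 y)) (at y)"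
      by (intro DERIV_minus DERIV_chain2[OF DERIV_ln_divide du0[OF that]] pos)
    then show ?thesis unfolding \<phi>_def phi0_def[abs_def] by simp
  qed
  have u1_nonpos: "u1 y \<le> 0" if yy: "y > \<xi>0" for y
  proof (rule ccontr)
    assume "\<not> u1 y \<le> 0"
    then obtain d where d: "d > 0" "\<forall>h>0. h < d \<longrightarrow> u0 y < u0 (y+h)"
      using DERIV_pos_inc_right[OF du0[OF yy]] by force
    then have "u0 y < u0 (y + d/2)" by auto
    moreover have "u0 (y + d/2) \<le> u0 y" using xi0(3)[of y "y + d/2"] yy d by auto
    ultimately show False by simp
  qed
  have p_eq: "deriv \<phi> y = -(u1 y / u0 y)" if "y > \<xi>0" for y
    using dphi[OF that] by (rule DERIV_imp_deriv)
  have dphi': "(\<phi> has_real_derivative deriv \<phi> y) (at y)" if "y > \<xi>0" for y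
    using dphi[OF that] p_eq[OF that] by simp
  have p_nonneg: "deriv \<phi> y \<ge> 0" if "y > \<xi>0" for y
    using p_eq[OF that] u1_nonpos[OF that] pos[of y] by (simp add: divide_nonpos_pos)
  have dp: "(deriv \<phi> has_real_derivative deriv (deriv \<phi>) y) (at y)" if "y > \<xi>0" for y
  proof -
    have "((\<lambda>z. -(u1 z / u0 z)) has_real_derivative
        - ((u2 y * u0 y - u1 y * u1 y) / (u0 y * u0 y))) (at y)"
      using pos[of y] by (intro DERIV_minus DERIV_divide du0 du1 that) auto
    then have D: "(deriv \<phi> has_real_derivative
        - ((u2 y * u0 y - u1 y * u1 y) / (u0 y * u0 y))) (at y)"
      by (rule has_field_derivative_transform_within_open[of _ _ _ "{\<xi>0<..}"])
         (use that p_eq in auto)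
    then show ?thesis using DERIV_imp_deriv[OF D] by simp
  qed
  define c where "c = 1 / (2 * (1+\<alpha>) * 2 powr \<alpha>)"
  have cpos: "c > 0" unfolding c_def using alpha_pos by simp
  have ev1: "eventually (\<lambda>x. \<bar>deriv (deriv \<phi>) x\<bar> \<le> 1/2 * \<bar>deriv \<phi> x\<bar>) at_top"
    using landau_o.smallD[OF phi_d2, of "1/2"] unfolding \<phi>_def by simp
  have ev2: "eventually (\<lambda>x. \<bar>deriv \<phi> x\<bar> \<le> c * \<bar>\<phi> x powr -\<alpha>\<bar>) at_top"
    using landau_o.smallD[OF phi_d1 cpos] unfolding \<phi>_def by simp
  have ev3: "eventually (\<lambda>x. u0 x < exp(-1)) at_top"
    using order_tendstoD(2)[OF lim_right, of "exp (-1)"] by simp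
  obtain N where N: "\<forall>x\<ge>N. \<bar>deriv (deriv \<phi>) x\<bar> \<le> 1/2 * \<bar>deriv \<phi> x\<bar> \<and>
      \<bar>deriv \<phi> x\<bar> \<le> c * \<bar>\<phi> x powr -\<alpha>\<bar> \<and> u0 x < exp(-1)"
    using eventually_conj[OF ev1 eventually_conj[OF ev2 ev3]] by (auto simp: eventually_at_top_linorder)
  define X where "X = max N (\<xi>0+1)"
  have key: "(1+\<alpha>) * (1 + \<phi> x) powr \<alpha> * deriv \<phi> x \<le> 1/2" if x: "x \<ge> X" for x
  proof -
    have Nx: "\<bar>deriv \<phi> x\<bar> \<le> c * \<bar>\<phi> x powr -\<alpha>\<bar>" "u0 x < exp(-1)" using N x unfolding X_def by auto
    have "ln (u0 x) < ln (exp (-1))" using Nx(2) pos[of x] by (subst ln_less_cancel_iff) auto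
    then have phi1: "\<phi> x > 1" unfolding \<phi>_def phi0_def by simp
    have pn: "deriv \<phi> x \<ge> 0" using p_nonneg[of x] x xi0(1) unfolding X_def by auto
    have pb: "deriv \<phi> x \<le> c * \<phi> x powr -\<alpha>" using Nx(1) pn by simp
    have "(1 + \<phi> x) powr \<alpha> \<le> (2 * \<phi> x) powr \<alpha>"
      using phi1 alpha_pos by (intro powr_mono2) auto
    also have "\<dots> = 2 powr \<alpha> * \<phi> x powr \<alpha>" using phi1 by (simp add: powr_mult)
    finally have r: "(1 + \<phi> x) powr \<alpha> \<le> 2 powr \<alpha> * \<phi> x powr \<alpha>" .
    have "(1+\<alpha>) * (1 + \<phi> x) powr \<alpha> * deriv \<phi> x \<le> (1+\<alpha>) * (2 powr \<alpha> * \<phi> x powr \<alpha>) * (c * \<phi> x powr -\<alpha>)"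
      using r pb pn alpha_pos by (intro mult_mono) auto
    also have "\<dots> = (1+\<alpha>) * 2 powr \<alpha> * c * (\<phi> x powr \<alpha> * \<phi> x powr -\<alpha>)" by simp
    also have "\<phi> x powr \<alpha> * \<phi> x powr -\<alpha> = 1" using phi1 by (simp add: powr_add[symmetric])
    also have "(1+\<alpha>) * 2 powr \<alpha> * c * 1 = 1/2" unfolding c_def using alpha_pos by simp
    finally show ?thesis .
  qed
  obtain \<delta> where \<delta>: "\<delta> > 0" "\<forall>y\<le>X. \<delta> \<le> u0 y"
  proof -
    from ereal_dense2[OF liminf_left] obtain z where z: "0 < ereal z" "ereal z < Liminf at_bot (\<lambda>x. ereal (u0 x))"
      by blast
    then have "eventually (\<lambda>x. ereal z < ereal (u0 x)) at_bot" by (intro less_LiminfD)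
    then obtain L where L0: "\<forall>x\<le>L. ereal z < ereal (u0 x)" unfolding eventually_at_bot_linorder by blast
    have L: "\<forall>x\<le>L. z < u0 x" using L0 by simp
    obtain m where m: "L \<le> X \<longrightarrow> (\<forall>y\<in>{L..X}. u0 m \<le> u0 y)"
    proof (cases "L \<le> X")
      case True
      have "continuous_on {L..X} u0" using cont by (rule continuous_on_subset) simp
      from continuous_attains_inf[OF compact_Icc _ this] True
      obtain m where "\<forall>y\<in>{L..X}. u0 m \<le> u0 y" by auto
      then show ?thesis using that by blast
    next
      case False
      then show ?thesis using that by blast
    qed
    show ?thesis
    proof (rule that[of "min z (u0 m)"])
      show "0 < min z (u0 m)" using z pos[of m] by simp
      show "\<forall>y\<le>X. min z (u0 m) \<le> u0 y"
      proof (intro allI impI)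
        fix y assume "y \<le> X"
        show "min z (u0 m) \<le> u0 y"
        proof (cases "y \<le> L")
          case True then show ?thesis using L by (simp add: less_imp_le min.coboundedI1)
        next
          case False
          then have "L \<le> X" "y \<in> {L..X}" using \<open>y \<le> X\<close> by auto
          then show ?thesis using m by (simp add: min.coboundedI2)
        qed
      qed
    qed
  qed
  define T where "T = \<bar>1 - ln \<delta>\<bar> + 1"
  define t1 where "t1 = T powr (\<alpha>+1) / (\<rho>*(\<alpha>+1)) + 1"
  have t1pos: "t1 > 0"
  proof -
    have "0 \<le> T powr (\<alpha>+1) / (\<rho>*(\<alpha>+1))" using alpha_pos rho_pos by simp
    then show ?thesis unfolding t1_def by linarith
  qed
  show ?thesis
  proof (intro exI[of _ t1] conjI allI impI t1pos)
    fix t x assume t: "t1 \<le> t" and x: "x0 \<alpha> \<rho> u0 t \<le> x"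
    define K where "K = \<rho> * (\<alpha> + 1) * t"
    define ct where "ct = exp (1 - (\<rho> * (\<alpha> + 1) * t + 1) powr (1 / (\<alpha> + 1)))"
    have ctpos: "ct > 0" unfolding ct_def by simp
    have "K \<ge> \<rho> * (\<alpha> + 1) * t1" unfolding K_def using t alpha_pos rho_pos by simp
    also have "\<rho> * (\<alpha> + 1) * t1 = T powr (\<alpha>+1) + \<rho> * (\<alpha> + 1)"
    proof -
      have nz: "\<rho> * (\<alpha> + 1) \<noteq> 0" using alpha_pos rho_pos by simp
      have "\<rho> * (\<alpha> + 1) * t1 = \<rho> * (\<alpha> + 1) * (T powr (\<alpha>+1) / (\<rho>*(\<alpha>+1))) + \<rho> * (\<alpha> + 1)"
        unfolding t1_def by (simp add: distrib_left)
      also have "\<rho> * (\<alpha> + 1) * (T powr (\<alpha>+1) / (\<rho>*(\<alpha>+1))) = T powr (\<alpha>+1)" using nz by simp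
      finally show ?thesis .
    qed
    finally have K1: "K + 1 > T powr (\<alpha>+1)" using alpha_pos rho_pos by (smt (verit) mult_pos_pos)
    have Kpos: "K \<ge> 0" unfolding K_def using t t1pos alpha_pos rho_pos by simp
    have "(T powr (\<alpha>+1)) powr (1/(\<alpha>+1)) < (K+1) powr (1/(\<alpha>+1))"
      using K1 alpha_pos by (intro powr_less_mono2) auto
    moreover have "(T powr (\<alpha>+1)) powr (1/(\<alpha>+1)) = T"
      unfolding powr_powr using alpha_pos by (simp add: T_def add_pos_nonneg)
    ultimately have "1 - ln \<delta> < (K+1) powr (1/(\<alpha>+1))" unfolding T_def by linarith
    then have "ct < exp (ln \<delta>)" unfolding ct_def K_def by simp
    then have ctd: "ct < \<delta>" using \<delta>(1) by simp
    define St where "St = {x. u0 x = ct}"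
    have x0eq: "x0 \<alpha> \<rho> u0 t = Sup St" unfolding x0_def St_def ct_def by simp
    obtain M where M: "\<forall>y\<ge>M. u0 y < ct"
      using order_tendstoD(2)[OF lim_right ctpos] by (auto simp: eventually_at_top_linorder)
    define b where "b = max M \<xi>0"
    have "\<exists>s. \<xi>0 \<le> s \<and> s \<le> b \<and> u0 s = ct"
    proof (rule IVT2')
      show "u0 b \<le> ct" using M unfolding b_def by (simp add: less_imp_le)
      show "ct \<le> u0 \<xi>0" using \<delta>(2) ctd unfolding X_def by (smt (verit) max.cobounded2)
      show "\<xi>0 \<le> b" unfolding b_def by simp
      show "continuous_on {\<xi>0..b} u0" using cont by (rule continuous_on_subset) auto
    qed
    then obtain s0 where s0: "u0 s0 = ct" by blast
    have s0X: "s0 > X" using \<delta>(2) ctd s0 by (metis not_le order.strict_iff_not)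
    have bdd: "bdd_above St" unfolding St_def bdd_above_def
    proof (intro exI ballI)
      fix y assume "y \<in> {x. u0 x = ct}"
      then show "y \<le> M" using M by (metis linorder_le_less_linear mem_Collect_eq order_less_irrefl less_imp_le)
    qed
    have "s0 \<le> Sup St" using bdd s0 unfolding St_def by (intro cSup_upper) auto
    then have xs0: "s0 \<le> x" using x x0eq by simp
    have xX: "x \<ge> X" using xs0 s0X by simp
    have xxi: "x > \<xi>0" using xX unfolding X_def by simp
    have ux: "u0 x \<le> ct" using xi0(3)[of s0 x] xs0 s0X s0 unfolding X_def by simp
    have Bx: "Bf \<alpha> K (\<phi> x) \<ge> 1"
    proof -
      have "ln (u0 x) \<le> ln ct" using ux pos[of x] ctpos by simp
      then have "\<phi> x \<ge> (K+1) powr (1/(\<alpha>+1)) - 1" unfolding \<phi>_def phi0_def ct_def K_def by simp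
      then have h: "1 + \<phi> x \<ge> (K+1) powr (1/(\<alpha>+1))" by simp
      have "((K+1) powr (1/(\<alpha>+1))) powr (\<alpha>+1) \<le> (1 + \<phi> x) powr (\<alpha>+1)"
        using h alpha_pos by (intro powr_mono2) auto
      moreover have "((K+1) powr (1/(\<alpha>+1))) powr (\<alpha>+1) = K+1"
        unfolding powr_powr using alpha_pos Kpos by simp
      ultimately show ?thesis unfolding Bf_def by simp
    qed
    have p1: "0 < 1 + - ln (u0 y)" for y using phi_nonneg[of y] unfolding \<phi>_def phi0_def by simp
    have contB: "continuous_on UNIV (\<lambda>y. Bf \<alpha> K (\<phi> y))"
      unfolding Bf_def \<phi>_def phi0_def using pos p1
      by (intro continuous_intros cont) (auto, metis less_irrefl pos, metis less_irrefl)
    define S where "S = {y. (\<lambda>_. \<xi>0) y < (\<lambda>y. y) y} \<inter> {y. (\<lambda>_. 0) y < Bf \<alpha> K (\<phi> y)}"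
    have openS: "open S" unfolding S_def
      by (intro open_Int open_Collect_less continuous_on_const continuous_on_id contB)
    have xS: "x \<in> S" using xxi Bx unfolding S_def by simp
    have W: "(\<lambda>y. wsol \<alpha> \<rho> u0 t y) = (\<lambda>y. hf \<alpha> K (\<phi> y))"
      by (simp add: wsol_def hf_def Bf_def \<phi>_def K_def)
    have dS: "\<forall>y\<in>S. (\<phi> has_real_derivative deriv \<phi> y) (at y)" using dphi' unfolding S_def by auto
    have pS: "\<forall>y\<in>S. 1 + \<phi> y > 0 \<and> Bf \<alpha> K (\<phi> y) > 0" using phi_nonneg unfolding S_def
      by (auto simp: add_pos_nonneg)
    note WD = W_derivs[OF openS xS alpha_pos dS dp[OF xxi] pS]
    have NX: "\<bar>deriv (deriv \<phi>) x\<bar> \<le> 1/2 * \<bar>deriv \<phi> x\<bar>" using N xX unfolding X_def by auto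
    have Pn: "deriv \<phi> x \<ge> 0" using p_nonneg[OF xxi] .
    note mb = mf_bounds[OF alpha_pos phi_nonneg Bx]
    have "-hf \<alpha> K (\<phi> x) * mf \<alpha> K (\<phi> x) * deriv \<phi> x + (-( (-(hf \<alpha> K (\<phi> x) * mf \<alpha> K (\<phi> x)) * deriv \<phi> x) * mf \<alpha> K (\<phi> x) * deriv \<phi> x
        + hf \<alpha> K (\<phi> x) * (mf' \<alpha> K (\<phi> x) * deriv \<phi> x) * deriv \<phi> x + hf \<alpha> K (\<phi> x) * mf \<alpha> K (\<phi> x) * deriv (deriv \<phi>) x)) \<le> 0"
    proof (rule final_ineq[OF _ mb(1) Pn _ mb(2) mb(3) _ alpha_pos])
      show "0 < hf \<alpha> K (\<phi> x)" unfolding hf_def by simp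
      show "\<bar>deriv (deriv \<phi>) x\<bar> \<le> deriv \<phi> x / 2" using NX Pn by simp
      show "(1 + \<alpha>) * (1 + \<phi> x) powr \<alpha> * deriv \<phi> x \<le> 1 / 2" using key[OF xX] .
    qed
    then show "deriv (\<lambda>y. wsol \<alpha> \<rho> u0 t y) x + deriv (deriv (\<lambda>y. wsol \<alpha> \<rho> u0 t y)) x \<le> 0"
      unfolding W WD by simp
  qed

qed

end
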